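(* Let $n\ge2$ and $\mu\in{]0,\infty[}$. The polynomial $$f=-\tfrac{1}{16}\big(z_0^2\overline{z_1}^2-\overline{z_0}^2z_1^2\big)^2\big(|z_0|^2|z_1|^2-3|z_1|^4\big)+|z_1|^{12}$$ (pointwise products) lies in $\mathcal{R}_{0,\mu}$, i.e. it is real-valued, in $\bigoplus_k\mathscr{P}^{k,k}(\mathbb{C}^{1+n})$ and satisfies $f(w)\ge0$ for all $w\in\mathbb{C}^{1+n}$ with $\mathcal{J}(w)=\mu$, but $f$ cannot be written as $\sum_{j=1}^\ell\overline{g_j}g_j+(\mathcal{J}-\mu)h$ with $\ell\in\mathbb{N}_0$, $g_j\in\bigoplus_k\mathscr{P}^{k,k}(\mathbb{C}^{1+n})$ and real-valued $h\in\bigoplus_k\mathscr{P}^{k,k}(\mathbb{C}^{1+n})$.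
   Context: $z_0,\dots,z_n$ are the complex coordinates on $\mathbb{C}^{1+n}$ and $\overline{z_j}$ their conjugates; $\mathscr{P}^{k,k}(\mathbb{C}^{1+n})$ is the complex span of monomials $z^K\overline{z}^L$ with $|K|=|L|=k$ ($K,L\in\mathbb{N}_0^{1+n}$); $\bigoplus_k\mathscr{P}^{k,k}(\mathbb{C}^{1+n})$ is the algebra of $\mathrm{U}(1)$-invariant polynomials, with pointwise product. $\mathcal{J}=\sum_{j=0}^n z_j\overline{z_j}$. $\mathcal{R}_{0,\mu}$ denotes the set of real-valued elements of $\bigoplus_k\mathscr{P}^{k,k}(\mathbb{C}^{1+n})$ that are nonnegative on the level set $\{w:\mathcal{J}(w)=\mu\}$ (the quadratic module of the classical reduction to $\mathbb{CP}^n$). The second assertion says $f\notin(\bigoplus_k\mathscr{P}^{k,k})^{++}_{\mathrm H}+(\langle\mathcal{J}-\mu\rangle)_{\mathrm H}$, where the ideal is generated with respect to the pointwise product. *)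

theory Defs
  imports Complex_Main
begin

text \<open>Points of C^(1+n) are functions w :: nat => complex; only coordinates 0..n matter.\<close>

definition mono :: "nat \<Rightarrow> (nat \<Rightarrow> nat) \<Rightarrow> (nat \<Rightarrow> nat) \<Rightarrow> (nat \<Rightarrow> complex) \<Rightarrow> complex" where
  "mono n K L w = (\<Prod>j\<le>n. w j ^ K j * cnj (w j) ^ L j)"

definition UInv :: "nat \<Rightarrow> ((nat \<Rightarrow> complex) \<Rightarrow> complex) set" where
  "UInv n = {f. \<exists>S c. finite S \<and>
      (\<forall>p\<in>S. (\<Sum>j\<le>n. fst p j) = (\<Sum>j\<le>n. snd p j)) \<and>
      f = (\<lambda>w. \<Sum>p\<in>S. c p * mono n (fst p) (snd p) w)}"

definition J :: "nat \<Rightarrow> (nat \<Rightarrow> complex) \<Rightarrow> complex" where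
  "J n w = (\<Sum>j\<le>n. w j * cnj (w j))"

definition R0mu :: "nat \<Rightarrow> real \<Rightarrow> ((nat \<Rightarrow> complex) \<Rightarrow> complex) set" where
  "R0mu n \<mu> = {f. f \<in> UInv n \<and> (\<forall>w. f w \<in> \<real>) \<and>
      (\<forall>w. J n w = complex_of_real \<mu> \<longrightarrow> 0 \<le> Re (f w))}"

definition fex :: "(nat \<Rightarrow> complex) \<Rightarrow> complex" where
  "fex w = (let z0 = w 0; z1 = w 1;
              a0 = z0 * cnj z0; a1 = z1 * cnj z1
            in - (1/16) * (z0^2 * cnj z1 ^ 2 - cnj z0 ^ 2 * z1^2)^2 * (a0 * a1 - 3 * a1^2) + a1^6)"

end

theory Submission
  imports Defs "HOL-Computational_Algebra.Polynomial"
begin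


lemma poly_sumsq: "poly (\<Sum>p\<leftarrow>ps. p^2) x = (\<Sum>p\<leftarrow>ps. (poly p x)^2)"
  by (induction ps) auto

lemma sumsq0:
  fixes f :: "'a \<Rightarrow> real"
  assumes "(\<Sum>x\<leftarrow>xs. (f x)^2) = 0" "y \<in> set xs" shows "f y = 0"
  using assms
proof (induction xs)
  case Nil then show ?case by simp
next
  case (Cons a xs)
  have "0 \<le> (\<Sum>x\<leftarrow>xs. (f x)^2)" by (rule sum_list_nonneg) auto
  then show ?case using Cons by (auto simp: add_nonneg_eq_0_iff)
qed

lemma pCons0_monom: "pCons 0 (p::real poly) = monom 1 1 * p"
proof -
  have "monom (1::real) 1 = [:0,1:]" by (simp add: monom_Suc monom_0)
  then show ?thesis by simp
qed

lemma sos_poly_aux: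
  fixes ps :: "real poly list"
  assumes "(\<Sum>p\<leftarrow>ps. p^2) = monom 1 (2*k) * q"
  shows "(\<forall>p\<in>set ps. \<forall>j<k. coeff p j = 0) \<and> (\<Sum>p\<leftarrow>ps. (coeff p k)^2) = poly q 0"
  using assms
proof (induction k arbitrary: ps)
  case 0
  then have "poly (\<Sum>p\<leftarrow>ps. p^2) 0 = poly q 0" by simp
  then have "(\<Sum>p\<leftarrow>ps. (poly p 0)^2) = poly q 0" by (metis poly_sumsq)
  then show ?case by (simp add: poly_0_coeff_0)
next
  case (Suc k)
  have "poly (\<Sum>p\<leftarrow>ps. p^2) 0 = 0" using Suc.prems by (simp add: poly_monom)
  hence "(\<Sum>p\<leftarrow>ps. (poly p 0)^2) = 0" by (simp add: poly_sumsq)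
  hence z: "\<forall>p\<in>set ps. poly p 0 = 0"
    using sumsq0[of "\<lambda>p. poly p 0"] by blast
  define ps' where "ps' = map (\<lambda>p. synthetic_div p 0) ps"
  have pe: "p = pCons 0 (synthetic_div p 0)" if "p \<in> set ps" for p
    using synthetic_div_correct[of p 0] z that by simp
  have "(\<Sum>p\<leftarrow>ps. p^2) = (\<Sum>p\<leftarrow>ps. monom 1 2 * (synthetic_div p 0)^2)"
  proof (rule arg_cong[where f=sum_list], rule map_cong[OF refl])
    fix p assume "p \<in> set ps"
    then have "p^2 = (monom 1 1 * synthetic_div p 0)^2" using pe pCons0_monom by metis
    also have "\<dots> = monom 1 2 * (synthetic_div p 0)^2"
      by (simp add: power_mult_distrib mult_monom power2_eq_square numeral_2_eq_2)
    finally show "p^2 = monom 1 2 * (synthetic_div p 0)^2" .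
  qed
  also have "\<dots> = monom 1 2 * (\<Sum>p\<leftarrow>ps'. p^2)"
    by (simp add: ps'_def sum_list_const_mult o_def)
  finally have e1: "(\<Sum>p\<leftarrow>ps. p^2) = monom 1 2 * (\<Sum>p\<leftarrow>ps'. p^2)" .
  have "monom (1::real) (2*Suc k) = monom 1 2 * monom 1 (2*k)" by (simp add: mult_monom)
  hence "monom 1 2 * (\<Sum>p\<leftarrow>ps'. p^2) = monom 1 2 * (monom 1 (2*k) * q)"
    using Suc.prems e1 by (metis mult.assoc)
  hence "(\<Sum>p\<leftarrow>ps'. p^2) = monom 1 (2*k) * q" by simp
  from Suc.IH[OF this] have IH: "\<forall>p\<in>set ps'. \<forall>j<k. coeff p j = 0"
    "(\<Sum>p\<leftarrow>ps'. (coeff p k)^2) = poly q 0" by auto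
  have c: "coeff p (Suc j) = coeff (synthetic_div p 0) j" if "p \<in> set ps" for p j
    using pe[OF that] by (metis coeff_pCons_Suc)
  have "\<forall>p\<in>set ps. \<forall>j<Suc k. coeff p j = 0"
  proof (intro ballI allI impI)
    fix p j assume p: "p \<in> set ps" and j: "j < Suc k"
    show "coeff p j = 0"
    proof (cases j)
      case 0 then show ?thesis using z p by (simp add: poly_0_coeff_0)
    next
      case (Suc j') then show ?thesis using c[OF p] IH(1) p j by (auto simp: ps'_def)
    qed
  qed
  moreover have "(\<Sum>p\<leftarrow>ps. (coeff p (Suc k))^2) = poly q 0"
  proof -
    have "(\<Sum>p\<leftarrow>ps. (coeff p (Suc k))^2) = (\<Sum>p\<leftarrow>ps. (coeff (synthetic_div p 0) k)^2)"
      using c by (metis (no_types, lifting) map_eq_conv)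
    also have "\<dots> = (\<Sum>p\<leftarrow>ps'. (coeff p k)^2)" by (simp add: ps'_def o_def)
    finally show ?thesis using IH(2) by simp
  qed
  ultimately show ?case by blast
qed

lemma sos_poly:
  fixes ps :: "real poly list"
  assumes "\<And>s. (\<Sum>p\<leftarrow>ps. (poly p s)^2) = s^(2*k) * poly q s"
  shows "(\<forall>p\<in>set ps. \<forall>j<k. coeff p j = 0) \<and> (\<Sum>p\<leftarrow>ps. (coeff p k)^2) = poly q 0"
proof (rule sos_poly_aux)
  show "(\<Sum>p\<leftarrow>ps. p^2) = monom 1 (2*k) * q"
    by (rule poly_eq_poly_eq_iff[THEN iffD1]) (auto simp: poly_sumsq assms poly_monom)
qed



lemma sum_list_zero_map: "(\<forall>x\<in>set xs. f x = 0) \<Longrightarrow> (\<Sum>x\<leftarrow>xs. f x) = (0::real)"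
  by (induction xs) auto

type_synonym ex3 = "nat \<times> nat \<times> nat"

fun mon3 :: "ex3 \<Rightarrow> real \<times> real \<times> real \<Rightarrow> real" where
  "mon3 (i,j,k) (a,b,c) = a^i*b^j*c^k"

fun deg3 :: "ex3 \<Rightarrow> nat" where "deg3 (i,j,k) = i+j+k"

definition evR :: "(real \<times> ex3) list \<Rightarrow> real \<times> real \<times> real \<Rightarrow> real" where
  "evR xs u = (\<Sum>(r,\<alpha>)\<leftarrow>xs. r * mon3 \<alpha> u)"

definition Motz :: "real \<Rightarrow> real \<Rightarrow> real \<Rightarrow> real" where
  "Motz a b c = a^4*b^2 + a^2*b^4 + c^6 - 3*a^2*b^2*c^2"

definition Cpoly :: "(real \<times> ex3) list \<Rightarrow> real \<Rightarrow> real \<Rightarrow> real poly" where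
  "Cpoly xs a b = (\<Sum>(r,(i,j,k))\<leftarrow>xs. monom (r*a^i*b^j) k)"

definition Ck :: "(real \<times> ex3) list \<Rightarrow> nat \<Rightarrow> real \<Rightarrow> real \<Rightarrow> real" where
  "Ck xs k a b = (\<Sum>(r,(i,j,k'))\<leftarrow>xs. if k' = k then r*a^i*b^j else 0)"

lemma evR_Nil[simp]: "evR [] u = 0" by (simp add: evR_def)
lemma evR_Cons[simp]: "evR ((r,\<alpha>)#xs) u = r * mon3 \<alpha> u + evR xs u" by (simp add: evR_def)
lemma Cpoly_Nil[simp]: "Cpoly [] a b = 0" by (simp add: Cpoly_def)
lemma Cpoly_Cons[simp]: "Cpoly ((r,(i,j,k))#xs) a b = monom (r*a^i*b^j) k + Cpoly xs a b"
  by (simp add: Cpoly_def)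
lemma Ck_Nil[simp]: "Ck [] k a b = 0" by (simp add: Ck_def)
lemma Ck_Cons[simp]: "Ck ((r,(i,j,k'))#xs) k a b = (if k' = k then r*a^i*b^j else 0) + Ck xs k a b"
  by (simp add: Ck_def)

lemma poly_Cpoly: "poly (Cpoly xs a b) c = evR xs (a,b,c)"
  by (induction xs rule: list.induct) (auto simp: poly_monom)

lemma coeff_Cpoly: "coeff (Cpoly xs a b) k = Ck xs k a b"
  by (induction xs rule: list.induct) (auto simp: coeff_monom)

definition Lf :: "(real \<Rightarrow> real \<Rightarrow> real) \<Rightarrow> real" where
  "Lf F = F 1 1 + F 1 (-1) + F (-1) 1 + F (-1) (-1) - 2*(F 1 0 + F (-1) 0 + F 0 1 + F 0 (-1)) + 4*F 0 0"

lemma Lf_sum: "Lf (\<lambda>a b. \<Sum>k\<in>A. G k a b) = (\<Sum>k\<in>A. Lf (G k))"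
  by (simp add: Lf_def sum.distrib sum_subtractf sum_distrib_left)

lemma Lf_add: "Lf (\<lambda>a b. F a b + G a b) = Lf F + Lf G"
  by (simp add: Lf_def algebra_simps)

lemma Lf_mon: assumes "i + j \<le> 3" shows "Lf (\<lambda>a b. r*a^i*b^j) = 0"
proof -
  have "i = 0 \<or> i = 1 \<or> j = 0 \<or> j = 1" using assms by arith
  then show ?thesis by (auto simp: Lf_def algebra_simps)
qed

lemma Lf_Ck:
  assumes "\<forall>(r,\<alpha>)\<in>set xs. deg3 \<alpha> = 6" "3 \<le> k"
  shows "Lf (Ck xs k) = 0"
  using assms(1)
proof (induction xs)
  case Nil then show ?case by (simp add: Lf_def)
next
  case (Cons e xs)
  obtain r i j k' where e: "e = (r,(i,j,k'))" by (cases e) auto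
  have h: "Lf (\<lambda>a b. if k' = k then r*a^i*b^j else 0) = 0"
  proof (cases "k' = k")
    case True then have "i + j \<le> 3" using Cons.prems e assms(2) by auto
    then show ?thesis using True Lf_mon by simp
  next
    case False then show ?thesis by (simp add: Lf_def)
  qed
  have "Lf (Ck (e#xs) k) = Lf (\<lambda>a b. (if k' = k then r*a^i*b^j else 0) + Ck xs k a b)"
    by (rule arg_cong[where f=Lf]) (simp add: e fun_eq_iff)
  also have "\<dots> = 0" using h Cons by (simp only: Lf_add) auto
  finally show ?case .
qed

lemma evR_partition:
  assumes "\<forall>(r,\<alpha>)\<in>set xs. deg3 \<alpha> = 6"
  shows "evR xs (a,b,1) = (\<Sum>k\<le>6. Ck xs k a b)"
  using assms
proof (induction xs)
  case Nil then show ?case by simp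
next
  case (Cons e xs)
  obtain r i j k' where e: "e = (r,(i,j,k'))" by (cases e) auto
  have "k' \<le> 6" using Cons.prems e by auto
  then have "(\<Sum>k\<le>6. (if k' = k then r*a^i*b^j else 0)) = r*a^i*b^j"
    by (simp add: sum.delta)
  then show ?case using Cons e by (simp add: sum.distrib)
qed

definition kap :: "(real \<times> ex3) list \<Rightarrow> real" where
  "kap xs = (\<Sum>(r,(i,j,k))\<leftarrow>xs. if k = 6 then r else 0)"

lemma Ck6_a0:
  assumes "\<forall>(r,\<alpha>)\<in>set xs. deg3 \<alpha> = 6"
  shows "Ck xs 6 a 0 = kap xs" "Ck xs 6 0 b = kap xs"
  using assms
  by (induction xs) (auto simp: kap_def split: prod.splits)

lemma sum_le6_only6:
  fixes f :: "nat \<Rightarrow> real"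
  assumes "\<forall>k<6. f k = (0::real)" shows "(\<Sum>k\<le>6. f k) = f 6"
proof -
  have "{..6::nat} = insert 6 {..<6}" by auto
  then show ?thesis using assms by simp
qed

lemma motzkin_contra:
  fixes reps :: "(real \<times> ex3) list list" and K :: real
  assumes K: "K > 0"
    and deg: "\<forall>xs\<in>set reps. \<forall>(r,\<alpha>)\<in>set xs. deg3 \<alpha> = 6"
    and id: "\<And>a b c. (\<Sum>xs\<leftarrow>reps. (evR xs (a,b,c))^2) = K * c^6 * Motz a b c"
  shows False
proof -
  have ps: "(\<Sum>p\<leftarrow>map (\<lambda>xs. Cpoly xs a b) reps. (poly p s)^2) = K * s^6 * Motz a b s" for a b s
    using id[of a b s] by (simp add: o_def poly_Cpoly)
  have M1: "\<forall>xs\<in>set reps. \<forall>j<3. Ck xs j a b = 0" for a b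
  proof -
    let ?q = "smult K ([:a^4*b^2+a^2*b^4, 0, -3*a^2*b^2:] + monom 1 6)"
    have "\<And>s. (\<Sum>p\<leftarrow>map (\<lambda>xs. Cpoly xs a b) reps. (poly p s)^2) = s^(2*3) * poly ?q s"
      unfolding ps by (simp add: Motz_def poly_monom algebra_simps power_numeral_reduce)
    from sos_poly[OF this] show ?thesis by (simp add: coeff_Cpoly)
  qed
  have M2: "\<forall>xs\<in>set reps. \<forall>j<6. Ck xs j a 0 = 0" for a
  proof -
    have "\<And>s. (\<Sum>p\<leftarrow>map (\<lambda>xs. Cpoly xs a 0) reps. (poly p s)^2) = s^(2*6) * poly [:K:] s"
      unfolding ps by (simp add: Motz_def algebra_simps)
    from sos_poly[OF this] show ?thesis by (simp add: coeff_Cpoly)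
  qed
  have M2': "\<forall>xs\<in>set reps. \<forall>j<6. Ck xs j 0 b = 0" for b
  proof -
    have "\<And>s. (\<Sum>p\<leftarrow>map (\<lambda>xs. Cpoly xs 0 b) reps. (poly p s)^2) = s^(2*6) * poly [:K:] s"
      unfolding ps by (simp add: Motz_def algebra_simps)
    from sos_poly[OF this] show ?thesis by (simp add: coeff_Cpoly)
  qed
  have corner: "evR xs (a,b,1) = 0" if "xs \<in> set reps" "a = 1 \<or> a = -1" "b = 1 \<or> b = -1" for xs a b
  proof -
    have "(\<Sum>xs\<leftarrow>reps. (evR xs (a,b,1))^2) = 0" using id[of a b 1] that(2,3)
      by (auto simp: Motz_def)
    then show ?thesis using sumsq0[of "\<lambda>xs. evR xs (a,b,1)"] that(1) by blast
  qed
  have k0: "kap xs = 0" if xs: "xs \<in> set reps" for xs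
  proof -
    have dx: "\<forall>(r,\<alpha>)\<in>set xs. deg3 \<alpha> = 6" using deg xs by blast
    have ax: "evR xs (a,0,1) = kap xs" for a
      using evR_partition[OF dx, of a 0] sum_le6_only6[of "\<lambda>k. Ck xs k a 0"] M2[of a] xs Ck6_a0[OF dx]
      by auto
    have bx: "evR xs (0,b,1) = kap xs" for b
      using evR_partition[OF dx, of 0 b] sum_le6_only6[of "\<lambda>k. Ck xs k 0 b"] M2'[of b] xs Ck6_a0[OF dx]
      by auto
    have "Lf (\<lambda>a b. evR xs (a,b,1)) = Lf (\<lambda>a b. \<Sum>k\<le>6. Ck xs k a b)"
      using evR_partition[OF dx] by simp
    also have "\<dots> = (\<Sum>k\<le>6. Lf (Ck xs k))" by (rule Lf_sum)
    also have "\<dots> = 0"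
    proof (rule sum.neutral, rule ballI)
      fix k assume "k \<in> {..6::nat}"
      show "Lf (Ck xs k) = 0"
      proof (cases "k < 3")
        case True
        then have "Ck xs k = (\<lambda>a b. 0)" using M1 xs by (auto simp: fun_eq_iff)
        then show ?thesis by (simp add: Lf_def)
      next
        case False then show ?thesis using Lf_Ck[OF dx] by simp
      qed
    qed
    finally have "Lf (\<lambda>a b. evR xs (a,b,1)) = 0" .
    then show ?thesis using ax bx corner[OF xs] by (simp add: Lf_def)
  qed
  have "(\<Sum>xs\<leftarrow>reps. (evR xs (0,0,1))^2) = 0"
  proof -
    have "\<And>xs. xs \<in> set reps \<Longrightarrow> evR xs (0,0,1) = 0"
    proof -
      fix xs assume xs: "xs \<in> set reps"
      have dx: "\<forall>(r,\<alpha>)\<in>set xs. deg3 \<alpha> = 6" using deg xs by blast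
      show "evR xs (0,0,1) = 0"
        using evR_partition[OF dx, of 0 0] sum_le6_only6[of "\<lambda>k. Ck xs k 0 0"] M2[of 0] xs Ck6_a0[OF dx] k0[OF xs]
        by auto
    qed
    then show ?thesis using sum_list_zero_map[of reps "\<lambda>xs. (evR xs (0,0,1))^2"] by simp
  qed
  moreover have "(\<Sum>xs\<leftarrow>reps. (evR xs (0,0,1))^2) = K" using id[of 0 0 1] by (simp add: Motz_def)
  ultimately show False using K by simp
qed



lemma mon3_scale: "mon3 \<alpha> (s*a, s*b, s*c) = s^(deg3 \<alpha>) * mon3 \<alpha> (a,b,c)"
  by (cases \<alpha>) (simp add: power_mult_distrib power_add)

definition Spoly :: "(real \<times> ex3) list \<Rightarrow> real \<times> real \<times> real \<Rightarrow> real poly" where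
  "Spoly xs u = (\<Sum>(r,\<alpha>)\<leftarrow>xs. monom (r * mon3 \<alpha> u) (deg3 \<alpha>))"

lemma poly_Spoly: "poly (Spoly xs (a,b,c)) s = evR xs (s*a, s*b, s*c)"
  by (induction xs) (auto simp: Spoly_def poly_monom mon3_scale)

lemma coeff_Spoly: "coeff (Spoly xs u) k = evR (filter (\<lambda>(r,\<alpha>). deg3 \<alpha> = k) xs) u"
  by (induction xs) (auto simp: Spoly_def coeff_monom)

lemma Motz_scale: "Motz (s*a) (s*b) (s*c) = s^6 * Motz a b c"
  by (simp add: Motz_def power_mult_distrib algebra_simps power_numeral_reduce)

lemma lowest:
  fixes reps :: "(real \<times> ex3) list list"
  assumes id: "\<And>a b c. (\<Sum>xs\<leftarrow>reps. (evR xs (a,b,c))^2) = K * (1+a^2+b^2+c^2)^m * c^6 * Motz a b c"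
  shows "(\<Sum>xs\<leftarrow>map (filter (\<lambda>(r,\<alpha>). deg3 \<alpha> = 6)) reps. (evR xs (a,b,c))^2) = K * c^6 * Motz a b c"
proof -
  let ?Q = "smult (K*c^6*Motz a b c) ([:1,0,a^2+b^2+c^2:]^m)"
  have "(\<Sum>p\<leftarrow>map (\<lambda>xs. Spoly xs (a,b,c)) reps. (poly p s)^2) = s^(2*6) * poly ?Q s" for s
  proof -
    have "(\<Sum>p\<leftarrow>map (\<lambda>xs. Spoly xs (a,b,c)) reps. (poly p s)^2)
        = (\<Sum>xs\<leftarrow>reps. (evR xs (s*a,s*b,s*c))^2)" by (simp add: o_def poly_Spoly)
    also have "\<dots> = K * (1+(s*a)^2+(s*b)^2+(s*c)^2)^m * (s*c)^6 * Motz (s*a) (s*b) (s*c)" by (rule id)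
    also have "\<dots> = s^(2*6) * poly ?Q s"
    proof -
      have B: "poly [:1,0,a^2+b^2+c^2:] s = 1+(s*a)^2+(s*b)^2+(s*c)^2"
        by (simp add: algebra_simps power2_eq_square)
      have PQ: "poly ?Q s = K*c^6*Motz a b c * (1+(s*a)^2+(s*b)^2+(s*c)^2)^m"
        by (simp only: poly_smult poly_power B)
      have S: "(s::real)^(2*6) = s^6*s^6" by (simp flip: power_add)
      show ?thesis unfolding Motz_scale PQ S by (simp add: power_mult_distrib mult_ac)
    qed
    finally show ?thesis .
  qed
  from sos_poly[OF this] have "(\<Sum>p\<leftarrow>map (\<lambda>xs. Spoly xs (a,b,c)) reps. (coeff p 6)^2) = poly ?Q 0"
    by blast
  then show ?thesis by (simp add: o_def coeff_Spoly)
qed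



definition evC :: "(complex \<times> ex3) list \<Rightarrow> real \<times> real \<times> real \<Rightarrow> complex" where
  "evC xs u = (\<Sum>(z,\<alpha>)\<leftarrow>xs. z * complex_of_real (mon3 \<alpha> u))"

lemma evC_Nil[simp]: "evC [] u = 0" by (simp add: evC_def)
lemma evC_Cons[simp]: "evC ((z,\<alpha>)#xs) u = z * complex_of_real (mon3 \<alpha> u) + evC xs u"
  by (simp add: evC_def)
lemma evC_append[simp]: "evC (xs@ys) u = evC xs u + evC ys u"
  by (simp add: evC_def)

definition lrep :: "(real \<times> real \<times> real \<Rightarrow> complex) \<Rightarrow> bool" where
  "lrep F \<longleftrightarrow> (\<exists>xs. \<forall>u. F u = evC xs u)"

fun padd :: "ex3 \<Rightarrow> ex3 \<Rightarrow> ex3" where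
  "padd (i,j,k) (i',j',k') = (i+i',j+j',k+k')"

lemma mon3_padd: "mon3 (padd \<alpha> \<beta>) u = mon3 \<alpha> u * mon3 \<beta> u"
  by (cases \<alpha>; cases \<beta>; cases u) (simp add: power_add)

definition pmul :: "(complex \<times> ex3) list \<Rightarrow> (complex \<times> ex3) list \<Rightarrow> (complex \<times> ex3) list" where
  "pmul xs ys = concat (map (\<lambda>(z,\<alpha>). map (\<lambda>(w,\<beta>). (z*w, padd \<alpha> \<beta>)) ys) xs)"

lemma evC_map1: "evC (map (\<lambda>(w,\<beta>). (z*w, padd \<alpha> \<beta>)) ys) u = z * complex_of_real (mon3 \<alpha> u) * evC ys u"
  by (induction ys) (auto simp: mon3_padd algebra_simps)

lemma evC_pmul: "evC (pmul xs ys) u = evC xs u * evC ys u"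
  by (induction xs) (auto simp: pmul_def evC_map1 algebra_simps)

lemma lrep_const: "lrep (\<lambda>u. z)"
  unfolding lrep_def by (rule exI[of _ "[(z,(0,0,0))]"]) auto

lemma lrep_a: "lrep (\<lambda>u. complex_of_real (fst u))"
  unfolding lrep_def by (rule exI[of _ "[(1,(1,0,0))]"]) auto
lemma lrep_b: "lrep (\<lambda>u. complex_of_real (fst (snd u)))"
  unfolding lrep_def by (rule exI[of _ "[(1,(0,1,0))]"]) auto
lemma lrep_c: "lrep (\<lambda>u. complex_of_real (snd (snd u)))"
  unfolding lrep_def by (rule exI[of _ "[(1,(0,0,1))]"]) auto

lemma lrep_add: "lrep F \<Longrightarrow> lrep G \<Longrightarrow> lrep (\<lambda>u. F u + G u)"
  unfolding lrep_def by (metis evC_append)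

lemma lrep_mult: "lrep F \<Longrightarrow> lrep G \<Longrightarrow> lrep (\<lambda>u. F u * G u)"
  unfolding lrep_def by (metis evC_pmul)

lemma lrep_pow: "lrep F \<Longrightarrow> lrep (\<lambda>u. F u ^ k)"
proof (induction k)
  case 0 then show ?case using lrep_const[of 1] by simp
next
  case (Suc k) then show ?case using lrep_mult[of F "\<lambda>u. F u ^ k"] by simp
qed

lemma lrep_sum: "finite A \<Longrightarrow> (\<And>x. x \<in> A \<Longrightarrow> lrep (F x)) \<Longrightarrow> lrep (\<lambda>u. \<Sum>x\<in>A. F x u)"
proof (induction A rule: finite_induct)
  case empty then show ?case using lrep_const[of 0] by simp
next
  case (insert x A) then show ?case using lrep_add[of "F x" "\<lambda>u. \<Sum>x\<in>A. F x u"] by simp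
qed

lemma lrep_prod: "finite A \<Longrightarrow> (\<And>x. x \<in> A \<Longrightarrow> lrep (F x)) \<Longrightarrow> lrep (\<lambda>u. \<Prod>x\<in>A. F x u)"
proof (induction A rule: finite_induct)
  case empty then show ?case using lrep_const[of 1] by simp
next
  case (insert x A) then show ?case using lrep_mult[of "F x" "\<lambda>u. \<Prod>x\<in>A. F x u"] by simp
qed

definition reL :: "(complex \<times> ex3) list \<Rightarrow> (real \<times> ex3) list" where
  "reL xs = map (\<lambda>(z,\<alpha>). (Re z, \<alpha>)) xs"
definition imL :: "(complex \<times> ex3) list \<Rightarrow> (real \<times> ex3) list" where
  "imL xs = map (\<lambda>(z,\<alpha>). (Im z, \<alpha>)) xs"

lemma Re_evC: "Re (evC xs u) = evR (reL xs) u"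
  by (induction xs) (auto simp: reL_def)
lemma Im_evC: "Im (evC xs u) = evR (imL xs) u"
  by (induction xs) (auto simp: imL_def)

lemma cmod_evC: "(cmod (evC xs u))^2 = (evR (reL xs) u)^2 + (evR (imL xs) u)^2"
  by (simp add: cmod_power2 Re_evC Im_evC)



definition Mx :: "real \<Rightarrow> real \<Rightarrow> real \<Rightarrow> real" where
  "Mx x y T = x^2*y^2*(x^2+y^2-3*T^2) + T^6"

lemma motz_nonneg0:
  fixes P Q R :: real assumes "0\<le>P" "0\<le>Q" "0\<le>R" shows "0 \<le> P*Q*(P+Q-3*R) + R^3"
proof (cases "3*R \<le> P+Q")
  case True then show ?thesis using assms by simp
next
  case False
  have pq: "P*Q \<le> (P+Q)^2/4" using sum_squares_ge_zero[of "P-Q" 0] by (simp add: power2_eq_square algebra_simps)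
  have "(P+Q)^2/4 * (P+Q-3*R) \<le> P*Q*(P+Q-3*R)"
    using pq False by (intro mult_right_mono_neg) auto
  moreover have "(P+Q)^2/4 * (P+Q-3*R) + R^3 = (P+Q-2*R)^2*(P+Q+R)/4"
    by (simp add: field_simps power2_eq_square power3_eq_cube) (simp add: algebra_simps)?
  moreover have "0 \<le> (P+Q-2*R)^2*(P+Q+R)/4" using assms by simp
  ultimately show ?thesis by linarith
qed

lemma Mx_nonneg: "0 \<le> Mx x y T"
  using motz_nonneg0[of "x^2" "y^2" "T^2"] unfolding Mx_def
  by (simp add: power_mult[symmetric] algebra_simps)

lemma fex_formula:
  "fex w = complex_of_real (Mx (Re (w 0 * cnj (w 1))) (Im (w 0 * cnj (w 1))) ((cmod (w 1))^2))"
proof -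
  define v where "v = w 0 * cnj (w 1)"
  define x where "x = Re v"
  define y where "y = Im v"
  have v: "v = of_real x + \<i> * of_real y" unfolding x_def y_def by (simp add: complex_eq_iff)
  have cv: "cnj v = of_real x - \<i> * of_real y" unfolding x_def y_def by (simp add: complex_eq_iff)
  define T where "T = cmod (w 1)"
  have a1: "w 1 * cnj (w 1) = of_real (T^2)" unfolding T_def by (rule complex_norm_square[symmetric])
  have e1: "w 0 ^ 2 * cnj (w 1) ^ 2 = v^2" unfolding v_def by (simp add: power_mult_distrib)
  have e2: "cnj (w 0) ^ 2 * w 1 ^ 2 = (cnj v)^2" unfolding v_def by (simp add: power_mult_distrib)
  have e3: "w 0 * cnj (w 0) * (w 1 * cnj (w 1)) = v * cnj v" unfolding v_def by (simp add: algebra_simps)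
  have "fex w = - (1/16) * (v^2 - (cnj v)^2)^2 * (v * cnj v - 3 * (of_real (T^2))^2) + (of_real (T^2))^6"
    unfolding fex_def Let_def e1 e2 e3 by (simp only: a1)
  also have "\<dots> = complex_of_real (Mx x y (T^2))"
    unfolding v cv Mx_def
    by (simp add: power2_eq_square algebra_simps) (simp add: power_numeral_reduce algebra_simps)?
  finally show ?thesis unfolding x_def y_def v_def T_def .
qed



lemma UInv_idx:
  fixes m :: nat and Ks Ls :: "nat \<Rightarrow> nat \<Rightarrow> nat" and cs :: "nat \<Rightarrow> complex"
  assumes "\<forall>i<m. (\<Sum>j\<le>n. Ks i j) = (\<Sum>j\<le>n. Ls i j)"
  shows "(\<lambda>w. \<Sum>i<m. cs i * mono n (Ks i) (Ls i) w) \<in> UInv n"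
proof -
  let ?h = "\<lambda>i. (Ks i, Ls i)"
  let ?S = "?h ` {..<m}"
  define c where "c p = (\<Sum>i\<in>{i\<in>{..<m}. ?h i = p}. cs i)" for p
  have eq: "(\<Sum>i<m. cs i * mono n (Ks i) (Ls i) w) = (\<Sum>p\<in>?S. c p * mono n (fst p) (snd p) w)" for w
  proof -
    have "(\<Sum>i<m. cs i * mono n (Ks i) (Ls i) w) = (\<Sum>p\<in>?S. \<Sum>i\<in>{i\<in>{..<m}. ?h i = p}. cs i * mono n (Ks i) (Ls i) w)"
      by (rule sum.image_gen[OF finite_lessThan[of m], of "\<lambda>i. cs i * mono n (Ks i) (Ls i) w" ?h])
    also have "\<dots> = (\<Sum>p\<in>?S. c p * mono n (fst p) (snd p) w)"
      unfolding c_def sum_distrib_right by (intro sum.cong refl) auto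
    finally show ?thesis .
  qed
  show ?thesis unfolding UInv_def
    by (rule CollectI, rule exI[of _ ?S], rule exI[of _ c]) (use assms eq in auto)
qed

definition e2 :: "nat \<Rightarrow> nat \<Rightarrow> nat \<Rightarrow> nat" where
  "e2 x y = (\<lambda>j. if j = 0 then x else if j = 1 then y else 0)"

lemma mono_e2: assumes "1 \<le> n"
  shows "mono n (e2 x y) (e2 x' y') w = w 0^x * cnj (w 0)^x' * (w 1^y * cnj (w 1)^y')"
proof -
  have "mono n (e2 x y) (e2 x' y') w = (\<Prod>j\<le>1. w j ^ e2 x y j * cnj (w j) ^ e2 x' y' j)"
    unfolding mono_def by (rule prod.mono_neutral_left[symmetric]) (use assms in \<open>auto simp: e2_def\<close>)
  then show ?thesis by (simp add: e2_def)
qed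

lemma sum_e2: assumes "1 \<le> n" shows "(\<Sum>j\<le>n. e2 x y j) = x + y"
proof -
  have "(\<Sum>j\<le>n. e2 x y j) = (\<Sum>j\<le>1. e2 x y j)"
    by (rule sum.mono_neutral_left[symmetric]) (use assms in \<open>auto simp: e2_def\<close>)
  then show ?thesis by (simp add: e2_def)
qed

lemma fex_UInv: assumes "1 \<le> n" shows "fex \<in> UInv n"
proof -
  define kx :: "nat list" where "kx = [5,4,3,2,1,0,0]"
  define ky :: "nat list" where "ky = [1,2,3,4,5,6,6]"
  define lx :: "nat list" where "lx = [1,0,3,2,5,4,0]"
  define ly :: "nat list" where "ly = [5,6,3,4,1,2,6]"
  define cf :: "complex list" where "cf = [-1/16, 3/16, 2/16, -6/16, -1/16, 3/16, 1]"
  have "(\<lambda>w. \<Sum>i<7. (cf!i) * mono n (e2 (kx!i) (ky!i)) (e2 (lx!i) (ly!i)) w) \<in> UInv n"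
    by (rule UInv_idx) (auto simp: sum_e2[OF assms] kx_def ky_def lx_def ly_def less_Suc_eq eval_nat_numeral)
  moreover have "(\<lambda>w. \<Sum>i<7. (cf!i) * mono n (e2 (kx!i) (ky!i)) (e2 (lx!i) (ly!i)) w) = fex"
  proof
    fix w
    show "(\<Sum>i<7. (cf!i) * mono n (e2 (kx!i) (ky!i)) (e2 (lx!i) (ly!i)) w) = fex w"
      unfolding fex_def Let_def
      by (simp add: mono_e2[OF assms] kx_def ky_def lx_def ly_def cf_def eval_nat_numeral)
         (simp add: field_simps power2_eq_square power3_eq_cube power_numeral_reduce)
  qed
  ultimately show ?thesis by simp
qed



lemma lrep_cong: "lrep F \<Longrightarrow> (\<And>u. G u = F u) \<Longrightarrow> lrep G"
  unfolding lrep_def by metis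

definition Nf :: "real \<times> real \<times> real \<Rightarrow> real" where
  "Nf u = 1 + (fst u)^2 + (fst (snd u))^2 + (snd (snd u))^2"

definition wq :: "real \<times> real \<times> real \<Rightarrow> nat \<Rightarrow> complex" where
  "wq u j = (if j = 0 then complex_of_real (fst u) + \<i> * complex_of_real (fst (snd u))
             else if j = 1 then complex_of_real (snd (snd u)) else if j = 2 then 1 else 0)"

definition tf :: "real \<Rightarrow> real \<times> real \<times> real \<Rightarrow> real" where
  "tf \<mu> u = sqrt (\<mu> / Nf u)"

definition wpt :: "real \<Rightarrow> real \<times> real \<times> real \<Rightarrow> nat \<Rightarrow> complex" where
  "wpt \<mu> u j = complex_of_real (tf \<mu> u) * wq u j"

lemma Nf_pos: "0 < Nf u"
  unfolding Nf_def by (simp add: add_pos_nonneg)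

lemma lrep_N: "lrep (\<lambda>u. complex_of_real (Nf u))"
proof (rule lrep_cong)
  show "lrep (\<lambda>u. 1 + (complex_of_real (fst u))^2 + (complex_of_real (fst (snd u)))^2 + (complex_of_real (snd (snd u)))^2)"
    by (intro lrep_add lrep_pow lrep_const lrep_a lrep_b lrep_c)
qed (simp add: Nf_def)

lemma lrep_wq: "lrep (\<lambda>u. wq u j)"
proof -
  consider "j = 0" | "j = 1" | "j = 2" | "j \<noteq> 0 \<and> j \<noteq> 1 \<and> j \<noteq> 2" by blast
  then show ?thesis
  proof cases
    case 1
    have "lrep (\<lambda>u. complex_of_real (fst u) + \<i> * complex_of_real (fst (snd u)))"
      by (intro lrep_add lrep_mult lrep_const lrep_a lrep_b)
    then show ?thesis by (rule lrep_cong) (simp add: wq_def 1)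
  next
    case 2 then show ?thesis using lrep_c by (simp add: wq_def)
  next
    case 3 then show ?thesis using lrep_const[of 1] by (simp add: wq_def)
  next
    case 4 then show ?thesis using lrep_const[of 0] by (simp add: wq_def)
  qed
qed

lemma lrep_cwq: "lrep (\<lambda>u. cnj (wq u j))"
proof -
  consider "j = 0" | "j = 1" | "j = 2" | "j \<noteq> 0 \<and> j \<noteq> 1 \<and> j \<noteq> 2" by blast
  then show ?thesis
  proof cases
    case 1
    have "lrep (\<lambda>u. complex_of_real (fst u) + (- \<i>) * complex_of_real (fst (snd u)))"
      by (intro lrep_add lrep_mult lrep_const lrep_a lrep_b)
    then show ?thesis by (rule lrep_cong) (simp add: wq_def 1)
  next
    case 2 then show ?thesis using lrep_c by (simp add: wq_def)
  next
    case 3 then show ?thesis using lrep_const[of 1] by (simp add: wq_def)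
  next
    case 4 then show ?thesis using lrep_const[of 0] by (simp add: wq_def)
  qed
qed

lemma lrep_mono: "lrep (\<lambda>u. mono n K L (wq u))"
  unfolding mono_def
  by (intro lrep_prod finite_atMost lrep_mult lrep_pow lrep_wq lrep_cwq)

lemma mono_scale:
  "mono n K L (\<lambda>j. complex_of_real t * x j) = complex_of_real t ^ (\<Sum>j\<le>n. K j + L j) * mono n K L x"
proof -
  have "mono n K L (\<lambda>j. complex_of_real t * x j)
      = (\<Prod>j\<le>n. complex_of_real t ^ (K j + L j) * (x j ^ K j * cnj (x j) ^ L j))"
    unfolding mono_def by (intro prod.cong refl) (simp add: power_mult_distrib power_add)
  also have "\<dots> = complex_of_real t ^ (\<Sum>j\<le>n. K j + L j) * mono n K L x"
    by (simp add: prod.distrib power_sum mono_def)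
  finally show ?thesis .
qed

lemma UInv_rep:
  assumes "g \<in> UInv n" "0 < \<mu>"
  shows "\<exists>D0. \<forall>D\<ge>D0. lrep (\<lambda>u. complex_of_real (Nf u)^D * g (wpt \<mu> u))"
proof -
  obtain S c where S: "finite S" "\<forall>p\<in>S. (\<Sum>j\<le>n. fst p j) = (\<Sum>j\<le>n. snd p j)"
    and g: "g = (\<lambda>w. \<Sum>p\<in>S. c p * mono n (fst p) (snd p) w)"
    using assms(1) unfolding UInv_def by blast
  define kk where "kk p = (\<Sum>j\<le>n. fst p j)" for p :: "(nat \<Rightarrow> nat) \<times> (nat \<Rightarrow> nat)"
  define D0 where "D0 = Max (insert 0 (kk ` S))"
  have kD: "kk p \<le> D0" if "p \<in> S" for p using S(1) that by (simp add: D0_def)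
  show ?thesis
  proof (intro exI allI impI)
    fix D assume D: "D0 \<le> D"
    have key: "complex_of_real (Nf u)^D * g (wpt \<mu> u)
       = (\<Sum>p\<in>S. c p * complex_of_real \<mu> ^ kk p * complex_of_real (Nf u) ^ (D - kk p) * mono n (fst p) (snd p) (wq u))" for u
    proof -
      have "complex_of_real (Nf u)^D * g (wpt \<mu> u) = (\<Sum>p\<in>S. complex_of_real (Nf u)^D * (c p * mono n (fst p) (snd p) (wpt \<mu> u)))"
        by (simp add: g sum_distrib_left)
      also have "\<dots> = (\<Sum>p\<in>S. c p * complex_of_real \<mu> ^ kk p * complex_of_real (Nf u) ^ (D - kk p) * mono n (fst p) (snd p) (wq u))"
      proof (rule sum.cong[OF refl])
        fix p assume p: "p \<in> S"
        have sm: "(\<Sum>j\<le>n. fst p j + snd p j) = kk p + kk p" using S(2) p by (simp add: kk_def sum.distrib)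
        have ms: "mono n (fst p) (snd p) (wpt \<mu> u) = complex_of_real (tf \<mu> u) ^ (kk p + kk p) * mono n (fst p) (snd p) (wq u)"
          using mono_scale[of n "fst p" "snd p" "tf \<mu> u" "wq u"] sm by (simp add: wpt_def[abs_def])
        have r: "Nf u ^ D * tf \<mu> u ^ (kk p + kk p) = \<mu>^kk p * Nf u^(D - kk p)"
        proof -
          have t2: "tf \<mu> u ^ 2 = \<mu> / Nf u" using Nf_pos[of u] assms(2) by (simp add: tf_def)
          have "tf \<mu> u ^ (kk p + kk p) = (\<mu> / Nf u)^kk p" by (metis t2 mult_2 power_mult)
          moreover have "Nf u ^ D = Nf u^(D - kk p) * Nf u ^ kk p" using kD[OF p] D by (simp flip: power_add)
          ultimately show ?thesis using Nf_pos[of u] by (simp add: power_divide)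
        qed
        have "complex_of_real (Nf u)^D * complex_of_real (tf \<mu> u) ^ (kk p + kk p)
            = complex_of_real \<mu> ^ kk p * complex_of_real (Nf u) ^ (D - kk p)"
          using arg_cong[OF r, of complex_of_real] by simp
        then show "complex_of_real (Nf u)^D * (c p * mono n (fst p) (snd p) (wpt \<mu> u))
            = c p * complex_of_real \<mu> ^ kk p * complex_of_real (Nf u) ^ (D - kk p) * mono n (fst p) (snd p) (wq u)"
          unfolding ms by (metis (no_types, lifting) mult.assoc mult.left_commute)
      qed
      finally show ?thesis .
    qed
    have "lrep (\<lambda>u. \<Sum>p\<in>S. c p * complex_of_real \<mu> ^ kk p * complex_of_real (Nf u) ^ (D - kk p) * mono n (fst p) (snd p) (wq u))"
      by (intro lrep_sum S(1) lrep_mult lrep_const lrep_pow lrep_N lrep_mono)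
    then show "lrep (\<lambda>u. complex_of_real (Nf u)^D * g (wpt \<mu> u))" using key by (rule lrep_cong)
  qed
qed



lemma sum_list_cong_set: "(\<And>x. x \<in> set xs \<Longrightarrow> f x = g x) \<Longrightarrow> (\<Sum>x\<leftarrow>xs. f x) = (\<Sum>x\<leftarrow>xs. g x)"
  by (induction xs) auto

lemma cnj_self: "cnj z * z = complex_of_real ((cmod z)^2)"
  by (metis complex_norm_square mult.commute)

lemma sum_cnj: "(\<Sum>g\<leftarrow>gs. cnj (g w) * g w) = complex_of_real (\<Sum>g\<leftarrow>gs. (cmod (g w))^2)"
proof (induction gs)
  case Nil then show ?case by simp
next
  case (Cons a gs)
  have "(\<Sum>g\<leftarrow>a#gs. cnj (g w) * g w) = cnj (a w) * a w + (\<Sum>g\<leftarrow>gs. cnj (g w) * g w)" by simp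
  also have "\<dots> = complex_of_real ((cmod (a w))^2) + complex_of_real (\<Sum>g\<leftarrow>gs. (cmod (g w))^2)"
    by (subst Cons.IH, subst cnj_self, rule refl)
  finally show ?case by simp
qed

lemma sum_concat2: "(\<Sum>xs\<leftarrow>concat (map (\<lambda>g. [A g, B g]) gs). f xs) = (\<Sum>g\<leftarrow>gs. f (A g) + f (B g))"
  by (induction gs) (auto simp: add.assoc)

lemma ex_D_list: fixes P :: "'a \<Rightarrow> nat \<Rightarrow> bool" shows "(\<forall>g\<in>set gs. \<exists>D0. \<forall>D\<ge>D0. P g D) \<Longrightarrow> \<exists>D0. \<forall>D\<ge>D0. \<forall>g\<in>set gs. P g D"
proof (induction gs)
  case Nil then show ?case by simp
next
  case (Cons a gs)
  then obtain D1 where D1: "\<forall>D\<ge>D1. P a D" by auto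
  from Cons obtain D2 where D2: "\<forall>D\<ge>D2. \<forall>g\<in>set gs. P g D" by auto
  show ?case
  proof (rule exI[of _ "max D1 D2"], intro allI impI ballI)
    fix D g assume "max D1 D2 \<le> D" "g \<in> set (a#gs)"
    then have "D1 \<le> D" "D2 \<le> D" "g = a \<or> g \<in> set gs"
      using max.cobounded1[of D1 D2] max.cobounded2[of D1 D2] by (linarith, linarith, simp)
    then show "P g D" using D1 D2 by auto
  qed
qed

lemma cm_scale: "(cmod (complex_of_real x * z))^2 = x^2 * (cmod z)^2"
  by (simp add: norm_mult power_mult_distrib)

lemma cm_ab: "(cmod (complex_of_real a + \<i> * complex_of_real b))^2 = a^2 + b^2"
  by (simp add: cmod_power2)

lemma J_wpt:
  assumes "2 \<le> n" "0 < \<mu>"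
  shows "J n (wpt \<mu> u) = complex_of_real \<mu>"
proof -
  have "J n (wpt \<mu> u) = (\<Sum>j\<le>n. complex_of_real ((cmod (wpt \<mu> u j))^2))"
    unfolding J_def by (simp only: complex_norm_square)
  also have "\<dots> = complex_of_real (\<Sum>j\<le>n. (cmod (wpt \<mu> u j))^2)" by (simp only: of_real_sum)
  finally have J1: "J n (wpt \<mu> u) = complex_of_real (\<Sum>j\<le>n. (cmod (wpt \<mu> u j))^2)" .
  have "(\<Sum>j\<le>n. (cmod (wpt \<mu> u j))^2) = (\<Sum>j\<le>2. (cmod (wpt \<mu> u j))^2)"
    by (rule sum.mono_neutral_left[symmetric]) (use assms in \<open>auto simp: wpt_def wq_def\<close>)
  also have "\<dots> = (tf \<mu> u)^2 * Nf u"
  proof -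
    have c0: "(cmod (wpt \<mu> u 0))^2 = (tf \<mu> u)^2 * ((fst u)^2 + (fst (snd u))^2)"
      by (simp add: wpt_def wq_def norm_mult power_mult_distrib cmod_power2)
    have c1: "(cmod (wpt \<mu> u 1))^2 = (tf \<mu> u)^2 * (snd (snd u))^2"
      by (simp add: wpt_def wq_def norm_mult power_mult_distrib)
    have c2: "(cmod (wpt \<mu> u 2))^2 = (tf \<mu> u)^2"
      by (simp add: wpt_def wq_def norm_mult power_mult_distrib)
    have "(\<Sum>j\<le>2. (cmod (wpt \<mu> u j))^2) = (cmod (wpt \<mu> u 0))^2 + (cmod (wpt \<mu> u 1))^2 + (cmod (wpt \<mu> u 2))^2"
      by (simp add: numeral_2_eq_2)
    then show ?thesis unfolding c0 c1 c2 by (simp add: Nf_def algebra_simps)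
  qed
  also have "\<dots> = \<mu>" using Nf_pos[of u] assms(2) by (simp add: tf_def)
  finally show ?thesis using J1 by simp
qed

lemma fex_wpt:
  "fex (wpt \<mu> (a,b,c)) = complex_of_real (tf \<mu> (a,b,c) ^ 12 * c^6 * Motz a b c)"
proof -
  define t where "t = tf \<mu> (a,b,c)"
  have w0: "wpt \<mu> (a,b,c) 0 = complex_of_real t * (complex_of_real a + \<i> * complex_of_real b)"
    by (simp add: wpt_def wq_def t_def)
  have w1: "wpt \<mu> (a,b,c) 1 = complex_of_real (t * c)"
    by (simp add: wpt_def wq_def t_def)
  have v: "wpt \<mu> (a,b,c) 0 * cnj (wpt \<mu> (a,b,c) 1) = complex_of_real (t^2*c*a) + \<i> * complex_of_real (t^2*c*b)"
    unfolding w0 w1 by (simp add: algebra_simps power2_eq_square)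
  have "fex (wpt \<mu> (a,b,c)) = complex_of_real (Mx (Re (wpt \<mu> (a,b,c) 0 * cnj (wpt \<mu> (a,b,c) 1)))
     (Im (wpt \<mu> (a,b,c) 0 * cnj (wpt \<mu> (a,b,c) 1))) ((cmod (wpt \<mu> (a,b,c) 1))^2))"
    by (rule fex_formula)
  also have "\<dots> = complex_of_real (Mx (t^2*c*a) (t^2*c*b) ((t*c)^2))"
  proof -
    have cm: "(cmod (wpt \<mu> (a,b,c) 1))^2 = t^2*c^2" unfolding w1 by (simp add: norm_mult power_mult_distrib)
    show ?thesis unfolding v cm by (simp add: power_mult_distrib)
  qed
  finally have "fex (wpt \<mu> (a,b,c)) = complex_of_real (Mx (t^2*c*a) (t^2*c*b) ((t*c)^2))" .
  also have "Mx (t^2*c*a) (t^2*c*b) ((t*c)^2) = t^12 * c^6 * Motz a b c"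
    by (simp add: Mx_def Motz_def power_mult_distrib algebra_simps power_numeral_reduce)
  finally show ?thesis by (simp add: t_def)
qed

lemma part2:
  assumes n: "2 \<le> n" and \<mu>: "0 < \<mu>" and gs: "set gs \<subseteq> UInv n"
    and idn: "\<forall>w. fex w = (\<Sum>g\<leftarrow>gs. cnj (g w) * g w) + (J n w - complex_of_real \<mu>) * h w"
  shows False
proof -
  have sq: "(\<Sum>g\<leftarrow>gs. (cmod (g (wpt \<mu> (a,b,c))))^2) = tf \<mu> (a,b,c) ^ 12 * c^6 * Motz a b c" for a b c
  proof -
    have "complex_of_real (\<Sum>g\<leftarrow>gs. (cmod (g (wpt \<mu> (a,b,c))))^2) = fex (wpt \<mu> (a,b,c))"
      using idn[rule_format, of "wpt \<mu> (a,b,c)"] J_wpt[OF n \<mu>] by (simp add: sum_cnj)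
    then show ?thesis unfolding fex_wpt of_real_eq_iff .
  qed
  have "\<forall>g\<in>set gs. \<exists>D0. \<forall>D\<ge>D0. lrep (\<lambda>u. complex_of_real (Nf u)^D * g (wpt \<mu> u))"
    using UInv_rep[OF _ \<mu>] gs by blast
  from ex_D_list[OF this] obtain D0 where D0: "\<forall>D\<ge>D0. \<forall>g\<in>set gs. lrep (\<lambda>u. complex_of_real (Nf u)^D * g (wpt \<mu> u))"
    by blast
  define D where "D = max D0 3"
  have D3: "3 \<le> D" and rep: "\<forall>g\<in>set gs. lrep (\<lambda>u. complex_of_real (Nf u)^D * g (wpt \<mu> u))"
    using D0 by (auto simp: D_def)
  define X where "X g = (SOME xs. \<forall>u. complex_of_real (Nf u)^D * g (wpt \<mu> u) = evC xs u)" for g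
  have X: "complex_of_real (Nf u)^D * g (wpt \<mu> u) = evC (X g) u" if "g \<in> set gs" for g u
  proof -
    have "\<exists>xs. \<forall>u. complex_of_real (Nf u)^D * g (wpt \<mu> u) = evC xs u" using rep that by (auto simp: lrep_def)
    from someI_ex[OF this] show ?thesis unfolding X_def by blast
  qed
  define reps where "reps = concat (map (\<lambda>g. [reL (X g), imL (X g)]) gs)"
  have id: "(\<Sum>xs\<leftarrow>reps. (evR xs (a,b,c))^2) = \<mu>^6 * (1+a^2+b^2+c^2)^(2*D-6) * c^6 * Motz a b c" for a b c
  proof -
    let ?u = "(a,b,c)"
    have "(\<Sum>xs\<leftarrow>reps. (evR xs ?u)^2) = (\<Sum>g\<leftarrow>gs. (cmod (evC (X g) ?u))^2)"
      unfolding reps_def sum_concat2 cmod_evC ..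
    also have "\<dots> = (\<Sum>g\<leftarrow>gs. Nf ?u^(2*D) * (cmod (g (wpt \<mu> ?u)))^2)"
    proof (rule sum_list_cong_set)
      fix g assume g: "g \<in> set gs"
      have "cmod (evC (X g) ?u) = Nf ?u ^ D * cmod (g (wpt \<mu> ?u))"
        unfolding X[OF g, symmetric] using Nf_pos[of ?u] by (simp add: norm_mult norm_power)
      then show "(cmod (evC (X g) ?u))^2 = Nf ?u^(2*D) * (cmod (g (wpt \<mu> ?u)))^2"
        by (simp add: power_mult_distrib power_mult[symmetric] mult.commute)
    qed
    also have "\<dots> = Nf ?u^(2*D) * (tf \<mu> ?u ^ 12 * c^6 * Motz a b c)"
      by (simp add: sum_list_const_mult sq)
    also have "\<dots> = \<mu>^6 * Nf ?u^(2*D-6) * c^6 * Motz a b c"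
    proof -
      have t2: "tf \<mu> ?u ^ 2 = \<mu> / Nf ?u" using Nf_pos[of ?u] \<mu> by (simp add: tf_def)
      have "tf \<mu> ?u ^ 12 = (\<mu> / Nf ?u)^6" by (metis t2 power_mult num_double numeral_times_numeral)
      moreover have "Nf ?u^(2*D) = Nf ?u^(2*D-6) * Nf ?u^6" using D3 by (simp flip: power_add)
      ultimately show ?thesis using Nf_pos[of ?u] by (simp add: power_divide)
    qed
    finally show ?thesis by (simp add: Nf_def)
  qed
  have id6: "(\<Sum>xs\<leftarrow>map (filter (\<lambda>(r,\<alpha>). deg3 \<alpha> = 6)) reps. (evR xs (a,b,c))^2) = \<mu>^6 * c^6 * Motz a b c" for a b c
    by (rule lowest[OF id])
  show False
    by (rule motzkin_contra[of "\<mu>^6", OF _ _ id6]) (use \<mu> in auto)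
qed


theorem proposition4p6:
  fixes n :: nat and \<mu> :: real
  assumes "2 \<le> n" and "0 < \<mu>"
  shows "fex \<in> R0mu n \<mu> \<and>
    \<not> (\<exists>gs h. set gs \<subseteq> UInv n \<and> h \<in> UInv n \<and> (\<forall>w. h w \<in> \<real>) \<and>
         (\<forall>w. fex w = (\<Sum>g\<leftarrow>gs. cnj (g w) * g w) + (J n w - complex_of_real \<mu>) * h w))"
proof
  have u: "fex \<in> UInv n" using fex_UInv assms(1) by simp
  have r: "\<forall>w. fex w \<in> \<real>" by (simp add: fex_formula)
  have p: "\<forall>w. J n w = complex_of_real \<mu> \<longrightarrow> 0 \<le> Re (fex w)" by (simp add: fex_formula Mx_nonneg)
  show "fex \<in> R0mu n \<mu>" unfolding R0mu_def using u r p by blast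
next
  show "\<not> (\<exists>gs h. set gs \<subseteq> UInv n \<and> h \<in> UInv n \<and> (\<forall>w. h w \<in> \<real>) \<and>
         (\<forall>w. fex w = (\<Sum>g\<leftarrow>gs. cnj (g w) * g w) + (J n w - complex_of_real \<mu>) * h w))"
    using part2[OF assms] by blast
qed

end
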